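(* Let $f:\Delta_{n-1}\to\Delta_{n-1}$ be a continuous map, with coordinate functions $f_1,\dots,f_n$. (i) If $f(\sigma)\subseteq\sigma$ for every face $\sigma$ of $\Delta_{n-1}$, then $f$ is surjective. (ii) Suppose, in addition to the hypothesis of (i), that for every $x\in\mathrm{int}(\Delta_{n-1})$, every nonempty subset $I\subsetneq[n]$, with $t:=\sum_{i\in I}x_i$, and every $\alpha\in(t,1]$, we have $f_i(x^I_\alpha)\ge f_i(x)$ for all $i\in I$, with strict inequality for at least one $i\in I$, where \[ x^I_\alpha:=\alpha\Big(\sum_{i\in I}\frac{x_i}{t}e_i\Big)+(1-\alpha)\Big(\sum_{j\in[n]\setminus I}\frac{x_j}{1-t}e_j\Big)\in\Delta_{n-1}. \] Then $f$ is injective on $f^{-1}(\mathrm{int}(\Delta_{n-1}))$.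
   Context: $e_1,\dots,e_n$ is the standard basis of $\mathbb{R}^n$, $\Delta_{n-1}=\mathrm{conv}\{e_1,\dots,e_n\}$ is the standard simplex, its faces are $\mathrm{conv}\{e_i:i\in I\}$ for $I\subseteq[n]$, and $\mathrm{int}(\Delta_{n-1})$ denotes its relative interior. *)

theory Defs
  imports "HOL-Analysis.Analysis"
begin

text \<open>Standard basis vector e_i of real^'n (index type 'n plays the role of [n]).\<close>
definition e_vec :: "'n::finite \<Rightarrow> real^'n" where
  "e_vec i = axis i 1"

definition simplex_face :: "'n::finite set \<Rightarrow> (real^'n) set" where
  "simplex_face I = convex hull (e_vec ` I)"

definition std_simplex :: "(real^'n::finite) set" where
  "std_simplex = convex hull (range e_vec)"

definition x_I_alpha :: "real^'n::finite \<Rightarrow> 'n set \<Rightarrow> real \<Rightarrow> real^'n" where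
  "x_I_alpha x I \<alpha> =
     (let t = (\<Sum>i\<in>I. x $ i) in
      \<alpha> *\<^sub>R (\<Sum>i\<in>I. (x $ i / t) *\<^sub>R e_vec i)
      + (1 - \<alpha>) *\<^sub>R (\<Sum>j\<in>UNIV - I. (x $ j / (1 - t)) *\<^sub>R e_vec j))"

end

theory Submission
  imports Defs
begin

lemma e_vec_nth: "e_vec i $ k = (if k = i then 1 else 0)"
  by (simp add: e_vec_def axis_def)

lemma inj_e_vec: "inj e_vec"
  by (auto simp: inj_def e_vec_def axis_eq_axis)

lemma sum_e_vec_nth: "(\<Sum>i\<in>I. c i *\<^sub>R e_vec i) $ k = (if k \<in> I then c k else 0)"
  by (simp add: e_vec_nth if_distrib sum.If_cases cong: if_cong)

lemma face_char:
  fixes I :: "'n::finite set"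
  shows "simplex_face I = {x. (\<forall>i. 0 \<le> x$i) \<and> (\<forall>i. i \<notin> I \<longrightarrow> x$i = 0) \<and> sum (($) x) UNIV = 1}"
proof -
  have fin: "finite (e_vec ` I)" by simp
  have inj: "inj_on e_vec I" using inj_e_vec by (meson inj_on_subset subset_UNIV)
  show ?thesis
    unfolding simplex_face_def convex_hull_finite[OF fin]
  proof (rule set_eqI, rule iffI)
    fix y :: "real^'n"
    assume "y \<in> {y. \<exists>u. (\<forall>x\<in>e_vec ` I. 0 \<le> u x) \<and> sum u (e_vec ` I) = 1 \<and> (\<Sum>x\<in>e_vec ` I. u x *\<^sub>R x) = y}"
    then obtain u where u: "\<forall>x\<in>e_vec ` I. 0 \<le> u x" "sum u (e_vec ` I) = 1"
      and y: "(\<Sum>x\<in>e_vec ` I. u x *\<^sub>R x) = y" by blast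
    have s: "y = (\<Sum>i\<in>I. u (e_vec i) *\<^sub>R e_vec i)"
      using y by (simp add: sum.reindex[OF inj])
    have s1: "(\<Sum>i\<in>I. u (e_vec i)) = 1" using u(2) by (simp add: sum.reindex[OF inj])
    have yk: "y $ k = (if k \<in> I then u (e_vec k) else 0)" for k
      unfolding s sum_e_vec_nth by simp
    have "sum (($) y) UNIV = (\<Sum>i\<in>I. u (e_vec i))"
      unfolding yk by (simp add: sum.If_cases)
    then show "y \<in> {x. (\<forall>i. 0 \<le> x$i) \<and> (\<forall>i. i \<notin> I \<longrightarrow> x$i = 0) \<and> sum (($) x) UNIV = 1}"
      using s1 u(1) by (auto simp: yk)
  next
    fix x :: "real^'n"
    assume "x \<in> {x. (\<forall>i. 0 \<le> x$i) \<and> (\<forall>i. i \<notin> I \<longrightarrow> x$i = 0) \<and> sum (($) x) UNIV = 1}"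
    then have x: "\<forall>i. 0 \<le> x $ i" "\<forall>i. i \<notin> I \<longrightarrow> x $ i = 0" "sum (($) x) UNIV = 1" by auto
    define u where "u = (\<lambda>v::real^'n. \<Sum>i\<in>I. v $ i * x $ i)"
    have ue: "u (e_vec i) = (if i \<in> I then x $ i else 0)" for i
    proof -
      have "u (e_vec i) = (\<Sum>ia\<in>I. if ia = i then x $ ia else 0)"
        unfolding u_def e_vec_nth by (intro sum.cong) auto
      then show ?thesis by (simp add: sum.delta)
    qed
    have sI: "(\<Sum>i\<in>I. x $ i) = 1"
    proof -
      have "sum (($) x) UNIV = sum (($) x) I + sum (($) x) (UNIV - I)"
        by (simp add: sum.subset_diff[of I UNIV])
      moreover have "sum (($) x) (UNIV - I) = 0" using x(2) by simp
      ultimately show ?thesis using x(3) by simp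
    qed
    have "(\<Sum>xa\<in>e_vec ` I. u xa *\<^sub>R xa) = (\<Sum>i\<in>I. (x$i) *\<^sub>R e_vec i)"
      by (simp add: sum.reindex[OF inj] ue)
    also have "\<dots> = x"
      using x by (auto simp: vec_eq_iff sum_e_vec_nth simp del: sum_component)
    finally have "(\<Sum>xa\<in>e_vec ` I. u xa *\<^sub>R xa) = x" .
    moreover have "sum u (e_vec ` I) = 1" using sI by (simp add: sum.reindex[OF inj] ue)
    moreover have "\<forall>xa\<in>e_vec ` I. 0 \<le> u xa" using x by (auto simp: ue)
    ultimately show "x \<in> {y. \<exists>u. (\<forall>x\<in>e_vec ` I. 0 \<le> u x) \<and> sum u (e_vec ` I) = 1 \<and> (\<Sum>x\<in>e_vec ` I. u x *\<^sub>R x) = y}"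
      by blast
  qed
qed

lemma simplex_char:
  "std_simplex = {x. (\<forall>i. 0 \<le> x$i) \<and> sum (($) x) UNIV = 1}"
proof -
  have "std_simplex = simplex_face UNIV" by (simp add: std_simplex_def simplex_face_def)
  then show ?thesis by (simp add: face_char)
qed

lemma e_vec_in_simplex: "e_vec j \<in> std_simplex"
proof -
  have "sum (($) (e_vec j)) UNIV = 1"
    by (simp add: e_vec_nth)
  then show ?thesis by (simp add: simplex_char e_vec_nth)
qed

lemma affine_hull_simplex: "affine hull std_simplex \<subseteq> {x::real^'n::finite. sum (($) x) UNIV = 1}"
proof -
  have eq: "{x::real^'n. sum (($) x) UNIV = 1} = {x. (\<chi> i. 1) \<bullet> x = 1}"
    by (simp add: inner_vec_def)
  have "affine {x::real^'n. sum (($) x) UNIV = 1}"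
    unfolding eq by (rule affine_hyperplane)
  moreover have "std_simplex \<subseteq> {x::real^'n. sum (($) x) UNIV = 1}"
    by (auto simp: simplex_char)
  ultimately show ?thesis by (intro hull_minimal)
qed

lemma relint_char:
  "rel_interior (std_simplex :: (real^'n::finite) set) = {x. (\<forall>i. 0 < x$i) \<and> sum (($) x) UNIV = 1}"
proof (rule set_eqI, rule iffI)
  fix x :: "real^'n"
  assume xr: "x \<in> rel_interior std_simplex"
  then obtain e where e: "e > 0" "ball x e \<inter> affine hull std_simplex \<subseteq> std_simplex" and xs: "x \<in> std_simplex"
    by (auto simp: mem_rel_interior_ball)
  have pos: "0 < x $ j" for j
  proof (rule ccontr)
    assume "\<not> 0 < x $ j"
    moreover have "0 \<le> x $ j" using xs by (simp add: simplex_char)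
    ultimately have xj: "x $ j = 0" by simp
    define d where "d = e / (2 * (1 + norm (x - e_vec j)))"
    have dpos: "d > 0" using e by (simp add: d_def add_pos_nonneg)
    define z where "z = (1 + d) *\<^sub>R x + (- d) *\<^sub>R e_vec j"
    have "z \<in> affine hull std_simplex"
      unfolding z_def
      by (rule mem_affine[OF affine_affine_hull]) (auto intro: hull_inc xs e_vec_in_simplex)
    moreover have "dist x z < e"
    proof -
      have "x - z = d *\<^sub>R (e_vec j - x)" by (simp add: z_def algebra_simps)
      then have "dist x z = d * norm (x - e_vec j)"
        using dpos by (simp add: dist_norm norm_minus_commute)
      also have "\<dots> < e"
      proof -
        have nn: "0 \<le> norm (x - e_vec j)" by simp
        have "norm (x - e_vec j) < 2 + 2 * norm (x - e_vec j)" using nn by linarith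
        from mult_strict_left_mono[OF this e(1)]
        have "e * norm (x - e_vec j) < e * (2 + 2 * norm (x - e_vec j))" .
        moreover have "0 < 2 + 2 * norm (x - e_vec j)" using nn by linarith
        ultimately show ?thesis unfolding d_def by (simp add: field_simps)
      qed
      finally show ?thesis .
    qed
    ultimately have "z \<in> std_simplex" using e(2) by auto
    moreover have "z $ j = - d" by (simp add: z_def xj e_vec_nth)
    ultimately show False using dpos by (metis (mono_tags) mem_Collect_eq neg_less_0_iff_less not_le simplex_char)
  qed
  show "x \<in> {x. (\<forall>i. 0 < x$i) \<and> sum (($) x) UNIV = 1}"
    using pos xs by (simp add: simplex_char)
next
  fix x :: "real^'n"
  assume "x \<in> {x. (\<forall>i. 0 < x$i) \<and> sum (($) x) UNIV = 1}"
  then have pos: "\<forall>i. 0 < x$i" and s: "sum (($) x) UNIV = 1" by auto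
  define e where "e = Min (range (($) x))"
  have epos: "e > 0" unfolding e_def using pos by simp
  have ele: "e \<le> x $ i" for i unfolding e_def by simp
  have xs: "x \<in> std_simplex" using pos s by (auto simp: simplex_char less_imp_le)
  have "ball x e \<inter> affine hull std_simplex \<subseteq> std_simplex"
  proof
    fix y assume y: "y \<in> ball x e \<inter> affine hull std_simplex"
    have "0 \<le> y $ i" for i
    proof -
      have "\<bar>(x - y) $ i\<bar> \<le> norm (x - y)" by (rule component_le_norm_cart)
      also have "\<dots> < e" using y by (simp add: dist_norm)
      finally show ?thesis using ele[of i] by simp
    qed
    moreover have "sum (($) y) UNIV = 1" using y affine_hull_simplex by blast
    ultimately show "y \<in> std_simplex" by (simp add: simplex_char)
  qed
  then show "x \<in> rel_interior std_simplex"
    using epos xs by (auto simp: mem_rel_interior_ball)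
qed

lemma sum_restrict_zero:
  fixes y :: "real^'n::finite"
  assumes "\<forall>i. i \<notin> T \<longrightarrow> y $ i = 0"
  shows "sum (($) y) UNIV = sum (($) y) T"
proof -
  have "sum (($) y) UNIV = sum (($) y) T + sum (($) y) (UNIV - T)"
    by (simp add: sum.subset_diff[of T UNIV])
  moreover have "sum (($) y) (UNIV - T) = 0" using assms by simp
  ultimately show ?thesis by simp
qed

lemma part1:
  fixes f :: "real^'n::finite \<Rightarrow> real^'n"
  assumes cont: "continuous_on std_simplex f"
    and maps: "f ` std_simplex \<subseteq> std_simplex"
    and face: "\<forall>I. f ` simplex_face I \<subseteq> simplex_face I"
  shows "f ` std_simplex = std_simplex"
proof
  show "f ` std_simplex \<subseteq> std_simplex" by (rule maps)
  show "std_simplex \<subseteq> f ` std_simplex"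
  proof
    fix p :: "real^'n" assume p: "p \<in> std_simplex"
    define c where "c = (\<lambda>x i. max 0 (p$i - f x $ i))"
    define C where "C = (\<lambda>x. \<Sum>i\<in>UNIV. c x i)"
    define G where "G = (\<lambda>x. \<chi> i. (x$i + c x i) / (1 + C x))"
    have cnn: "0 \<le> c x i" for x i by (simp add: c_def)
    have Cnn: "0 \<le> C x" for x unfolding C_def by (simp add: sum_nonneg cnn)
    have nz: "1 + C x \<noteq> 0" for x using Cnn[of x] by linarith
    have cG: "continuous_on std_simplex G"
      unfolding G_def C_def c_def
      apply (intro continuous_intros cont)
      using nz unfolding C_def c_def by auto
    have GS: "G x \<in> std_simplex" if x: "x \<in> std_simplex" for x
    proof -
      have xn: "\<forall>i. 0 \<le> x$i" and xs: "sum (($) x) UNIV = 1" using x by (auto simp: simplex_char)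
      have pos: "0 < 1 + C x" using Cnn[of x] by linarith
      have "(\<Sum>i\<in>UNIV. (x$i + c x i) / (1 + C x)) = (\<Sum>i\<in>UNIV. (x$i + c x i)) / (1 + C x)"
        by (simp add: sum_divide_distrib)
      also have "\<dots> = 1" using xs pos by (simp add: sum.distrib C_def)
      finally show ?thesis using xn cnn pos by (simp add: simplex_char G_def)
    qed
    have comp: "compact (std_simplex :: (real^'n) set)"
      unfolding std_simplex_def by (intro compact_convex_hull finite_imp_compact) simp
    have conv: "convex (std_simplex :: (real^'n) set)"
      unfolding std_simplex_def by simp
    have ne: "(std_simplex :: (real^'n) set) \<noteq> {}" using p by (metis empty_iff)
    obtain x where x: "x \<in> std_simplex" and fix_x: "G x = x"
      using brouwer[OF comp conv ne cG] GS by blast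
    have xn: "\<forall>i. 0 \<le> x$i" and xs: "sum (($) x) UNIV = 1" using x by (auto simp: simplex_char)
    have pos: "0 < 1 + C x" using Cnn[of x] by linarith
    have ceq: "c x i = x $ i * C x" for i
    proof -
      have "G x $ i = x $ i" using fix_x by simp
      then have "(x$i + c x i) / (1 + C x) = x $ i" by (simp add: G_def)
      then have "x$i + c x i = x $ i * (1 + C x)" using pos by (simp add: field_simps)
      then show ?thesis by (simp add: algebra_simps)
    qed
    have fx: "f x \<in> std_simplex" using maps x by auto
    have fxn: "\<forall>i. 0 \<le> f x $i" and fxs: "sum (($) (f x)) UNIV = 1" using fx by (auto simp: simplex_char)
    have pn: "\<forall>i. 0 \<le> p $i" and ps: "sum (($) p) UNIV = 1" using p by (auto simp: simplex_char)
    show "p \<in> f ` std_simplex"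
    proof (cases "C x = 0")
      case True
      then have "\<forall>i\<in>UNIV. c x i = 0" unfolding C_def using cnn
        by (subst sum_nonneg_eq_0_iff[symmetric]) auto
      then have le: "p $ i \<le> f x $ i" for i unfolding c_def by (metis UNIV_I diff_le_0_iff_le max.bounded_iff order_refl)
      have "p = f x"
      proof (rule ccontr)
        assume "p \<noteq> f x"
        then obtain i where "p $ i \<noteq> f x $ i" by (auto simp: vec_eq_iff)
        then have "p $ i < f x $ i" using le[of i] by simp
        then have "sum (($) p) UNIV < sum (($) (f x)) UNIV"
          using le by (intro sum_strict_mono_ex1) auto
        then show False using ps fxs by simp
      qed
      then show ?thesis using x by blast
    next
      case False
      then have Cpos: "C x > 0" using Cnn[of x] by simp
      define T where "T = {i. 0 < x $ i}"
      have "x \<in> simplex_face T"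
        using xn xs by (auto simp: face_char T_def less_le)
      then have "f x \<in> simplex_face T" using face by blast
      then have fz: "\<forall>i. i \<notin> T \<longrightarrow> f x $ i = 0" by (simp add: face_char)
      have fT: "sum (($) (f x)) T = 1" using sum_restrict_zero[OF fz] fxs by simp
      have xz: "\<forall>i. i \<notin> T \<longrightarrow> x $ i = 0" using xn by (auto simp: T_def less_le)
      have "sum (($) x) T = 1" using sum_restrict_zero[OF xz] xs by simp
      then have Tne: "T \<noteq> {}" by auto
      have lt: "f x $ i < p $ i" if "i \<in> T" for i
      proof -
        have "0 < c x i" using ceq[of i] that Cpos by (simp add: T_def)
        then show ?thesis by (simp add: c_def)
      qed
      have "sum (($) (f x)) T < sum (($) p) T"
        using Tne lt by (intro sum_strict_mono) auto
      moreover have "sum (($) p) T \<le> sum (($) p) UNIV"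
        using pn by (intro sum_mono2) auto
      ultimately show ?thesis using fT ps by simp
    qed
  qed
qed

definition nrm :: "real^'n::finite \<Rightarrow> real^'n" where
  "nrm v = (1 / sum (($) v) UNIV) *\<^sub>R v"

definition sc :: "'n::finite set \<Rightarrow> real \<Rightarrow> real^'n \<Rightarrow> real^'n" where
  "sc I l v = (\<chi> i. if i \<in> I then l * v$i else v$i)"

definition mulv :: "('n::finite \<Rightarrow> real) \<Rightarrow> real^'n \<Rightarrow> real^'n" where
  "mulv r v = (\<chi> i. r i * v$i)"

lemma sum_pos_vec: "\<forall>i. 0 < v$i \<Longrightarrow> 0 < sum (($) (v::real^'n::finite)) UNIV"
  by (intro sum_pos) auto

lemma nrm_pos:
  assumes "\<forall>i. 0 < v$i"
  shows "nrm (v::real^'n::finite) \<in> rel_interior std_simplex"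
proof -
  have sp: "0 < sum (($) v) UNIV" using sum_pos_vec[OF assms] .
  have "sum (($) (nrm v)) UNIV = sum (($) v) UNIV / sum (($) v) UNIV"
    unfolding nrm_def by (simp add: sum_divide_distrib[symmetric])
  then have "sum (($) (nrm v)) UNIV = 1" using sp by simp
  moreover have "\<forall>i. 0 < nrm v $ i" using assms sp by (simp add: nrm_def)
  ultimately show ?thesis by (simp add: relint_char)
qed

lemma nrm_scale: "c > 0 \<Longrightarrow> nrm (c *\<^sub>R v) = nrm (v::real^'n::finite)"
proof -
  assume c: "c > 0"
  have "sum (($) (c *\<^sub>R v)) UNIV = c * sum (($) v) UNIV" by (simp add: sum_distrib_left)
  then show ?thesis using c by (simp add: nrm_def vec_eq_iff)
qed

lemma nrm_id: "sum (($) v) UNIV = 1 \<Longrightarrow> nrm (v::real^'n::finite) = v"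
  unfolding nrm_def by simp

lemma move:
  fixes f :: "real^'n::finite \<Rightarrow> real^'n"
  assumes cond: "\<forall>x\<in>rel_interior std_simplex. \<forall>I. I \<noteq> {} \<and> I \<noteq> UNIV \<longrightarrow>
               (\<forall>\<alpha>. (\<Sum>i\<in>I. x $ i) < \<alpha> \<and> \<alpha> \<le> 1 \<longrightarrow>
                  (\<forall>i\<in>I. f (x_I_alpha x I \<alpha>) $ i \<ge> f x $ i) \<and>
                  (\<exists>i\<in>I. f (x_I_alpha x I \<alpha>) $ i > f x $ i))"
    and v: "\<forall>i. 0 < v$i" and I: "I \<noteq> {}" "I \<noteq> UNIV" and l: "l > 1"
  shows "(\<forall>i\<in>I. f (nrm v) $ i \<le> f (nrm (sc I l v)) $ i) \<and> (\<exists>i\<in>I. f (nrm v) $ i < f (nrm (sc I l v)) $ i)"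
proof -
  define x where "x = nrm v"
  have xr: "x \<in> rel_interior std_simplex" unfolding x_def using nrm_pos[OF v] .
  define S where "S = sum (($) v) UNIV"
  define SI where "SI = sum (($) v) I"
  define SC where "SC = sum (($) v) (UNIV - I)"
  have SS: "S = SI + SC" unfolding S_def SI_def SC_def by (simp add: sum.subset_diff[of I UNIV])
  have SIp: "SI > 0" unfolding SI_def using v I by (intro sum_pos) auto
  have SCp: "SC > 0" unfolding SC_def using v I by (intro sum_pos) auto
  have Sp: "S > 0" using SS SIp SCp by simp
  define t where "t = (\<Sum>i\<in>I. x $ i)"
  have t: "t = SI / S" unfolding t_def x_def nrm_def S_def SI_def by (simp add: sum_divide_distrib)
  define \<alpha> where "\<alpha> = l * SI / (l * SI + SC)"
  have lSI: "l * SI > 0" using l SIp by simp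
  have "SI * SC < l * SI * SC" using l SIp SCp by simp
  then have key: "SI * (l * SI + SC) < l * SI * (SI + SC)" by (simp add: algebra_simps)
  have p1: "0 < l * SI + SC" using lSI SCp by simp
  have p2: "0 < SI + SC" using SIp SCp by simp
  have "SI < l * SI * (SI + SC) / (l * SI + SC)"
    using key p1 by (simp add: pos_less_divide_eq)
  also have "\<dots> = \<alpha> * (SI + SC)" unfolding \<alpha>_def by simp
  finally have "SI / (SI + SC) < \<alpha>" using p2 by (simp add: pos_divide_less_eq)
  then have ta: "t < \<alpha>" unfolding t SS .
  have a1: "\<alpha> \<le> 1" unfolding \<alpha>_def using lSI SCp by simp
  have ssc: "sum (($) (sc I l v)) UNIV = l * SI + SC"
  proof -
    have "sum (($) (sc I l v)) UNIV = sum (($) (sc I l v)) I + sum (($) (sc I l v)) (UNIV - I)"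
      by (simp add: sum.subset_diff[of I UNIV])
    also have "sum (($) (sc I l v)) I = l * SI" unfolding SI_def sc_def by (simp add: sum_distrib_left)
    also have "sum (($) (sc I l v)) (UNIV - I) = SC" unfolding SC_def sc_def by simp
    finally show ?thesis .
  qed
  have eq: "x_I_alpha x I \<alpha> = nrm (sc I l v)"
  proof (subst vec_eq_iff, rule allI)
    fix k
    have "x_I_alpha x I \<alpha> $ k = \<alpha> * (if k \<in> I then x $ k / t else 0) + (1 - \<alpha>) * (if k \<in> UNIV - I then x $ k / (1 - t) else 0)"
      unfolding x_I_alpha_def Let_def t_def[symmetric]
      by (simp only: vector_add_component vector_scaleR_component sum_e_vec_nth real_scaleR_def)
    also have "\<dots> = nrm (sc I l v) $ k"
    proof (cases "k \<in> I")
      case True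
      then show ?thesis unfolding nrm_def ssc x_def t \<alpha>_def
        using SIp Sp lSI SCp by (simp add: sc_def S_def[symmetric] field_simps)
    next
      case False
      have omt: "1 - t = SC / S" unfolding t using SS Sp by (simp add: field_simps)
      have oma: "1 - \<alpha> = SC / (l * SI + SC)" unfolding \<alpha>_def using lSI SCp by (simp add: field_simps)
      have xk: "x $ k / (1 - t) = v $ k / SC" unfolding omt x_def nrm_def S_def[symmetric]
        using Sp SCp by simp
      have "\<alpha> * (if k \<in> I then x $ k / t else 0) + (1 - \<alpha>) * (if k \<in> UNIV - I then x $ k / (1 - t) else 0)
          = SC / (l * SI + SC) * (v $ k / SC)" using False by (simp add: oma xk)
      also have "\<dots> = v $ k / (l * SI + SC)" using SCp by simp
      also have "\<dots> = nrm (sc I l v) $ k" using False unfolding nrm_def ssc by (simp add: sc_def)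
      finally show ?thesis .
    qed
    finally show "x_I_alpha x I \<alpha> $ k = nrm (sc I l v) $ k" .
  qed
  show ?thesis
    using cond xr I ta a1 unfolding eq[symmetric] x_def[symmetric] t_def by blast
qed

lemma chain:
  fixes g :: "real^'n::finite \<Rightarrow> real^'n"
  assumes Hm: "\<And>u I l. \<forall>i. 0 < u$i \<Longrightarrow> I \<noteq> {} \<Longrightarrow> I \<noteq> UNIV \<Longrightarrow> l > 1 \<Longrightarrow>
      (\<forall>i\<in>I. g u $ i \<le> g (sc I l u) $ i) \<and> (\<exists>i\<in>I. g u $ i < g (sc I l u) $ i)"
    and Hs: "\<And>u c. c > 0 \<Longrightarrow> g (c *\<^sub>R u) = g u"
    and v: "\<forall>i. 0 < v$i"
  shows "\<forall>r. (\<forall>i. 0 < r i) \<longrightarrow> card {i. r i < Max (range r)} = k \<longrightarrow>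
     (\<forall>i. r i = Max (range r) \<longrightarrow> g v $ i \<le> g (mulv r v) $ i) \<and>
     ((\<exists>i. r i \<noteq> Max (range r)) \<longrightarrow> (\<exists>i. r i = Max (range r) \<and> g v $ i < g (mulv r v) $ i))"
proof (induction k rule: less_induct)
  case (less k)
  show ?case
  proof (intro allI impI)
    fix r :: "'n \<Rightarrow> real"
    assume rpos: "\<forall>i. 0 < r i" and ck: "card {i. r i < Max (range r)} = k"
    define M where "M = Max (range r)"
    have rle: "r i \<le> M" for i unfolding M_def by simp
    have "M \<in> range r" unfolding M_def by (intro Max_in) auto
    then obtain i0 where i0: "r i0 = M" by auto
    have Mpos: "M > 0" using rpos i0 by metis
    show "(\<forall>i. r i = Max (range r) \<longrightarrow> g v $ i \<le> g (mulv r v) $ i) \<and>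
     ((\<exists>i. r i \<noteq> Max (range r)) \<longrightarrow> (\<exists>i. r i = Max (range r) \<and> g v $ i < g (mulv r v) $ i))"
    proof (cases "\<exists>i. r i \<noteq> M")
      case False
      then have "mulv r v = M *\<^sub>R v" by (simp add: mulv_def vec_eq_iff)
      then have "g (mulv r v) = g v" using Hs Mpos by simp
      then show ?thesis using False unfolding M_def[symmetric] by simp
    next
      case True
      then obtain j where j: "r j \<noteq> M" by auto
      define A where "A = {i. r i = M}"
      define B where "B = {i. r i < M}"
      have jB: "j \<in> B" using j rle[of j] by (simp add: B_def)
      define M2 where "M2 = Max (r ` B)"
      have "M2 \<in> r ` B" unfolding M2_def using jB by (intro Max_in) auto
      then obtain i2 where i2B: "i2 \<in> B" and i2: "r i2 = M2" by auto
      have M2M: "M2 < M" using i2B i2 by (simp add: B_def)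
      have M2pos: "M2 > 0" using rpos i2 by metis
      have leM2: "r i \<le> M2" if "r i < M" for i
        unfolding M2_def using that by (intro Max_ge) (auto simp: B_def)
      define r' where "r' = (\<lambda>i. min (r i) M2)"
      have r'pos: "\<forall>i. 0 < r' i" using rpos M2pos by (simp add: r'_def)
      have Max': "Max (range r') = M2"
      proof (rule Max_eqI)
        show "finite (range r')" by simp
        show "y \<le> M2" if "y \<in> range r'" for y using that by (auto simp: r'_def)
        show "M2 \<in> range r'" using i2 by (auto simp: r'_def intro!: image_eqI[of _ _ i2])
      qed
      have sub: "{i. r' i < M2} \<subset> {i. r i < M}"
      proof
        show "{i. r' i < M2} \<subseteq> {i. r i < M}" using M2M by (auto simp: r'_def)
        have "i2 \<in> {i. r i < M}" using i2B by (simp add: B_def)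
        moreover have "i2 \<notin> {i. r' i < M2}" using i2 by (simp add: r'_def)
        ultimately show "{i. r' i < M2} \<noteq> {i. r i < M}" by blast
      qed
      have cl: "card {i. r' i < Max (range r')} < k"
        unfolding Max' ck[symmetric] M_def[symmetric] by (rule psubset_card_mono[OF _ sub]) simp
      have IH: "\<forall>i. r' i = M2 \<longrightarrow> g v $ i \<le> g (mulv r' v) $ i"
        using less[OF cl] r'pos Max' by auto
      define u where "u = mulv r' v"
      have upos: "\<forall>i. 0 < u$i" using r'pos v by (simp add: u_def mulv_def)
      have ru: "mulv r v = sc A (M / M2) u"
      proof (subst vec_eq_iff, rule allI)
        fix i
        show "mulv r v $ i = sc A (M / M2) u $ i"
        proof (cases "i \<in> A")
          case True
          then have "r i = M" by (simp add: A_def)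
          then show ?thesis using True M2M M2pos by (simp add: mulv_def sc_def u_def r'_def)
        next
          case False
          then have "r i < M" using rle[of i] by (simp add: A_def)
          then have "r' i = r i" using leM2 by (simp add: r'_def)
          then show ?thesis using False by (simp add: mulv_def sc_def u_def)
        qed
      qed
      have Ane: "A \<noteq> {}" using i0 by (auto simp: A_def)
      have AU: "A \<noteq> UNIV" using j by (auto simp: A_def)
      have l1: "M / M2 > 1" using M2M M2pos by simp
      have step: "(\<forall>i\<in>A. g u $ i \<le> g (mulv r v) $ i) \<and> (\<exists>i\<in>A. g u $ i < g (mulv r v) $ i)"
        unfolding ru using Hm[OF upos Ane AU l1] .
      have r'A: "r' i = M2" if "i \<in> A" for i using that M2M by (simp add: A_def r'_def)
      have weak: "g v $ i \<le> g u $ i" if "i \<in> A" for i using IH r'A[OF that] by (simp add: u_def)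
      have c1: "\<forall>i. r i = M \<longrightarrow> g v $ i \<le> g (mulv r v) $ i"
      proof (intro allI impI)
        fix i assume "r i = M"
        then have iA: "i \<in> A" by (simp add: A_def)
        show "g v $ i \<le> g (mulv r v) $ i" using weak[OF iA] step iA by force
      qed
      from step obtain i where iA: "i \<in> A" and lt: "g u $ i < g (mulv r v) $ i" by blast
      have "r i = M \<and> g v $ i < g (mulv r v) $ i" using iA lt weak[OF iA] by (simp add: A_def)
      then have c2: "\<exists>i. r i = M \<and> g v $ i < g (mulv r v) $ i" by blast
      show ?thesis using c1 c2 unfolding M_def by blast
    qed
  qed
qed

lemma pos_of_relint:
  fixes f :: "real^'n::finite \<Rightarrow> real^'n"
  assumes face: "\<forall>I. f ` simplex_face I \<subseteq> simplex_face I"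
    and x: "x \<in> std_simplex" and fx: "f x \<in> rel_interior std_simplex"
  shows "\<forall>i. 0 < x $ i"
proof
  fix j
  show "0 < x $ j"
  proof (rule ccontr)
    assume "\<not> 0 < x $ j"
    moreover have "0 \<le> x $ j" using x by (simp add: simplex_char)
    ultimately have xj: "x $ j = 0" by simp
    have "x \<in> simplex_face (UNIV - {j})" using x xj by (auto simp: face_char simplex_char)
    then have "f x \<in> simplex_face (UNIV - {j})" using face by blast
    then have "f x $ j = 0" by (simp add: face_char)
    moreover have "0 < f x $ j" using fx by (simp add: relint_char)
    ultimately show False by simp
  qed
qed

lemma part2:
  fixes f :: "real^'n::finite \<Rightarrow> real^'n"
  assumes face: "\<forall>I. f ` simplex_face I \<subseteq> simplex_face I"
    and cond: "\<forall>x\<in>rel_interior std_simplex. \<forall>I. I \<noteq> {} \<and> I \<noteq> UNIV \<longrightarrow>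
               (\<forall>\<alpha>. (\<Sum>i\<in>I. x $ i) < \<alpha> \<and> \<alpha> \<le> 1 \<longrightarrow>
                  (\<forall>i\<in>I. f (x_I_alpha x I \<alpha>) $ i \<ge> f x $ i) \<and>
                  (\<exists>i\<in>I. f (x_I_alpha x I \<alpha>) $ i > f x $ i))"
  shows "inj_on f {x \<in> std_simplex. f x \<in> rel_interior std_simplex}"
proof (rule inj_onI)
  fix x y
  assume xA: "x \<in> {x \<in> std_simplex. f x \<in> rel_interior std_simplex}"
    and yA: "y \<in> {x \<in> std_simplex. f x \<in> rel_interior std_simplex}" and fxy: "f x = f y"
  have xp: "\<forall>i. 0 < x $ i" using pos_of_relint[OF face] xA by blast
  have yp: "\<forall>i. 0 < y $ i" using pos_of_relint[OF face] yA by blast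
  have xs: "sum (($) x) UNIV = 1" and ys: "sum (($) y) UNIV = 1" using xA yA by (auto simp: simplex_char)
  define g where "g = (\<lambda>v. f (nrm v))"
  have Hm: "(\<forall>i\<in>I. g u $ i \<le> g (sc I l u) $ i) \<and> (\<exists>i\<in>I. g u $ i < g (sc I l u) $ i)"
    if "\<forall>i. 0 < u$i" "I \<noteq> {}" "I \<noteq> UNIV" "l > 1" for u I l
    unfolding g_def using move[OF cond that] .
  have Hs: "g (c *\<^sub>R u) = g u" if "c > 0" for u c
    unfolding g_def by (metis nrm_scale that)
  define r where "r = (\<lambda>i. y $ i / x $ i)"
  have rpos: "\<forall>i. 0 < r i" using xp yp by (simp add: r_def)
  have ry: "mulv r x = y" using xp by (simp add: mulv_def r_def vec_eq_iff less_imp_neq[symmetric])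
  have gx: "g x = f x" unfolding g_def using nrm_id[OF xs] by simp
  have gy: "g y = f y" unfolding g_def using nrm_id[OF ys] by simp
  have C: "(\<forall>i. r i = Max (range r) \<longrightarrow> g x $ i \<le> g (mulv r x) $ i) \<and>
     ((\<exists>i. r i \<noteq> Max (range r)) \<longrightarrow> (\<exists>i. r i = Max (range r) \<and> g x $ i < g (mulv r x) $ i))"
    using chain[of g x "card {i. r i < Max (range r)}", OF Hm Hs xp] rpos by blast
  show "x = y"
  proof (cases "\<exists>i. r i \<noteq> Max (range r)")
    case True
    then obtain i where "g x $ i < g (mulv r x) $ i" using C by blast
    then show ?thesis using gx gy ry fxy by simp
  next
    case False
    define M where "M = Max (range r)"
    have rM: "r i = M" for i using False M_def by blast
    have "y $ i = M * x $ i" for i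
    proof -
      have "y $ i / x $ i = M" using rM[of i] by (simp add: r_def)
      then show ?thesis using xp by (metis divide_eq_eq less_irrefl)
    qed
    then have yM: "y = M *\<^sub>R x" by (simp add: vec_eq_iff)
    have "sum (($) y) UNIV = M * sum (($) x) UNIV" unfolding yM by (simp add: sum_distrib_left)
    then have "M = 1" using xs ys by simp
    then show ?thesis using yM by simp
  qed
qed

theorem lemma6p4:
  fixes f :: "real^'n::finite \<Rightarrow> real^'n"
  assumes cont: "continuous_on std_simplex f"
    and maps: "f ` std_simplex \<subseteq> std_simplex"
  shows "((\<forall>I. f ` simplex_face I \<subseteq> simplex_face I) \<longrightarrow> f ` std_simplex = std_simplex)
       \<and> (((\<forall>I. f ` simplex_face I \<subseteq> simplex_face I) \<and>
            (\<forall>x\<in>rel_interior std_simplex. \<forall>I. I \<noteq> {} \<and> I \<noteq> UNIV \<longrightarrow>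
               (\<forall>\<alpha>. (\<Sum>i\<in>I. x $ i) < \<alpha> \<and> \<alpha> \<le> 1 \<longrightarrow>
                  (\<forall>i\<in>I. f (x_I_alpha x I \<alpha>) $ i \<ge> f x $ i) \<and>
                  (\<exists>i\<in>I. f (x_I_alpha x I \<alpha>) $ i > f x $ i))))
          \<longrightarrow> inj_on f {x \<in> std_simplex. f x \<in> rel_interior std_simplex})"
  using part1[OF cont maps] part2 by blast

end
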